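(* For every ideal $I\subset\mathbb{K}[S_M]$ and every sparse order $\prec$ on $\mathbb{K}[S_M]$, there exists a finite sparse Gröbner basis of $I$ with respect to $\prec$.
   Context: Let $\mathbb{K}$ be a field of characteristic $0$, $M\subset\mathbb{R}^n$ a polytope with $0\in M$, $S_M\subset\mathbb{Z}^n$ the affine semigroup generated by $M\cap\mathbb{Z}^n$ and $S_M^h\subset\mathbb{Z}^{n+1}$ the one generated by $\{(s,1):s\in M\cap\mathbb{Z}^n\}$, both assumed pointed. $\mathbb{K}[S]$ is the semigroup algebra with monomials $X^s$, $X^sX^t=X^{s+t}$. The affine degree $\delta^A(X^s)$ of a monomial of $\mathbb{K}[S_M]$ is the least $d\in\mathbb{N}$ with $(s,d)\in S_M^h$; the homogenization of a monomial is $\chi^{-1}(X^s)=X^{(s,\delta^A(X^s))}\in\mathbb{K}[S_M^h]$, and for $X^{(s,d)}\in\mathbb{K}[S_M^h]$ its sparse degree is $\delta(X^{(s,d)})=\delta^A(X^s)$. A sparse order is defined from a monomial order $<_M$ on $\mathbb{K}[S_M]$ by $X^s\prec X^r$ iff $\delta^A(X^s)<\delta^A(X^r)$, or equality and $X^s<_MX^r$. Divisibility: $X^{(s,d_s)}\mid_\delta X^{(r,d_r)}$ if some monomial $X^{(t,d_t)}\in\mathbb{K}[S_M^h]$ satisfies $X^{(s,d_s)}X^{(t,d_t)}=X^{(r,d_r)}$ and $\delta(X^{(s,d_s)})+\delta(X^{(t,d_t)})=\delta(X^{(r,d_r)})$; for monomials of $\mathbb{K}[S_M]$, $X^s\mid_\delta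 X^r$ iff $\chi^{-1}(X^s)\mid_\delta\chi^{-1}(X^r)$. A sparse Gröbner basis of $I$ w.r.t. $\prec$ is a subset of $I$ generating $I$ such that every nonzero $f\in I$ has some element $g$ of it with $\mathrm{LM}_\prec(g)\mid_\delta\mathrm{LM}_\prec(f)$. *)

theory Defs
  imports "HOL-Analysis.Analysis" "HOL-Library.Poly_Mapping"
begin

definition lattice_points :: "(real ^ 'n) set \<Rightarrow> (int ^ 'n) set" where
  "lattice_points M = {z. (\<chi> i. real_of_int (z $ i)) \<in> M}"

definition is_polytope :: "(real ^ 'n) set \<Rightarrow> bool" where
  "is_polytope M \<longleftrightarrow> (\<exists>P. finite P \<and> M = convex hull P)"

inductive_set monoid_gen :: "'a::monoid_add set \<Rightarrow> 'a set" for A where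
  zero: "0 \<in> monoid_gen A"
| add: "s \<in> monoid_gen A \<Longrightarrow> a \<in> A \<Longrightarrow> s + a \<in> monoid_gen A"

definition pointed :: "'a::group_add set \<Rightarrow> bool" where
  "pointed S \<longleftrightarrow> (\<forall>s\<in>S. - s \<in> S \<longrightarrow> s = 0)"

definition SM :: "(real ^ 'n) set \<Rightarrow> (int ^ 'n) set" where
  "SM M = monoid_gen (lattice_points M)"

text \<open>S_M^h, a subset of Z^(n+1) = int^'n \<times> int\<close>
definition SMh :: "(real ^ 'n) set \<Rightarrow> ((int ^ 'n) \<times> int) set" where
  "SMh M = monoid_gen {(s, 1) | s. s \<in> lattice_points M}"

definition affine_deg :: "(real ^ 'n) set \<Rightarrow> int ^ 'n \<Rightarrow> nat" where
  "affine_deg M s = (LEAST d::nat. (s, int d) \<in> SMh M)"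

text \<open>Homogenization chi^{-1}(X^s) = X^(s, deg s) (on exponents)\<close>
definition homog :: "(real ^ 'n) set \<Rightarrow> int ^ 'n \<Rightarrow> (int ^ 'n) \<times> int" where
  "homog M s = (s, int (affine_deg M s))"

definition sparse_deg :: "(real ^ 'n) set \<Rightarrow> (int ^ 'n) \<times> int \<Rightarrow> nat" where
  "sparse_deg M sd = affine_deg M (fst sd)"

definition hdiv :: "(real ^ 'n) set \<Rightarrow> (int ^ 'n) \<times> int \<Rightarrow> (int ^ 'n) \<times> int \<Rightarrow> bool" where
  "hdiv M a b \<longleftrightarrow> (\<exists>c \<in> SMh M. a + c = b \<and> sparse_deg M a + sparse_deg M c = sparse_deg M b)"

definition sdiv :: "(real ^ 'n) set \<Rightarrow> int ^ 'n \<Rightarrow> int ^ 'n \<Rightarrow> bool" where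
  "sdiv M s r \<longleftrightarrow> hdiv M (homog M s) (homog M r)"

text \<open>Elements of K[S] are finitely supported maps from exponents to K, supported in S;
  the product is the convolution product of poly_mapping, so X^s X^t = X^(s+t).\<close>
definition salg :: "(int ^ 'n) set \<Rightarrow> ((int ^ 'n) \<Rightarrow>\<^sub>0 'k::field) set" where
  "salg S = {f. Poly_Mapping.keys f \<subseteq> S}"

definition is_ideal :: "('a \<Rightarrow>\<^sub>0 'k::field) set \<Rightarrow> ('a::monoid_add \<Rightarrow>\<^sub>0 'k) set \<Rightarrow> bool" where
  "is_ideal R I \<longleftrightarrow> I \<subseteq> R \<and> 0 \<in> I \<and> (\<forall>f\<in>I. \<forall>g\<in>I. f + g \<in> I)
      \<and> (\<forall>f\<in>I. \<forall>h\<in>R. h * f \<in> I)"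

definition ideal_gen :: "('a \<Rightarrow>\<^sub>0 'k::field) set \<Rightarrow> ('a::monoid_add \<Rightarrow>\<^sub>0 'k) set \<Rightarrow> ('a \<Rightarrow>\<^sub>0 'k) set" where
  "ideal_gen R G = \<Inter>{J. is_ideal R J \<and> G \<subseteq> J}"

definition monomial_order :: "(int ^ 'n) set \<Rightarrow> (int ^ 'n \<Rightarrow> int ^ 'n \<Rightarrow> bool) \<Rightarrow> bool" where
  "monomial_order S lt \<longleftrightarrow>
     (\<forall>s\<in>S. \<not> lt s s) \<and>
     (\<forall>s\<in>S. \<forall>t\<in>S. \<forall>u\<in>S. lt s t \<longrightarrow> lt t u \<longrightarrow> lt s u) \<and>
     (\<forall>s\<in>S. \<forall>t\<in>S. s \<noteq> t \<longrightarrow> lt s t \<or> lt t s) \<and>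
     (\<forall>s\<in>S. \<forall>t\<in>S. \<forall>u\<in>S. lt s t \<longrightarrow> lt (s + u) (t + u)) \<and>
     (\<forall>s\<in>S. s \<noteq> 0 \<longrightarrow> lt 0 s)"

definition sparse_order :: "(real ^ 'n) set \<Rightarrow> (int ^ 'n \<Rightarrow> int ^ 'n \<Rightarrow> bool) \<Rightarrow> int ^ 'n \<Rightarrow> int ^ 'n \<Rightarrow> bool" where
  "sparse_order M lt s r \<longleftrightarrow>
     affine_deg M s < affine_deg M r \<or> (affine_deg M s = affine_deg M r \<and> lt s r)"

definition lead_exp :: "('a \<Rightarrow> 'a \<Rightarrow> bool) \<Rightarrow> ('a \<Rightarrow>\<^sub>0 'k::zero) \<Rightarrow> 'a" where
  "lead_exp prec f = (THE s. s \<in> Poly_Mapping.keys f \<and> (\<forall>t\<in>Poly_Mapping.keys f. t \<noteq> s \<longrightarrow> prec t s))"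

definition sparse_groebner_basis ::
  "(real ^ 'n) set \<Rightarrow> (int ^ 'n \<Rightarrow> int ^ 'n \<Rightarrow> bool) \<Rightarrow> ((int ^ 'n) \<Rightarrow>\<^sub>0 'k::field) set
     \<Rightarrow> ((int ^ 'n) \<Rightarrow>\<^sub>0 'k) set \<Rightarrow> bool" where
  "sparse_groebner_basis M prec I G \<longleftrightarrow>
     G \<subseteq> I \<and> ideal_gen (salg (SM M)) G = I \<and>
     (\<forall>f\<in>I. f \<noteq> 0 \<longrightarrow> (\<exists>g\<in>G. g \<noteq> 0 \<and> sdiv M (lead_exp prec g) (lead_exp prec f)))"

end

theory Submission
  imports Defs
begin

primrec rep :: "nat \<Rightarrow> 'a::monoid_add \<Rightarrow> 'a" where
  "rep 0 a = 0" | "rep (Suc n) a = rep n a + a"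

lemma rep_add: "rep (m + n) a = rep m a + rep n (a::'a::comm_monoid_add)"
  by (induction n) (auto simp: add.assoc)

lemma rep_diff: "m \<le> n \<Longrightarrow> rep n a - rep m a = rep (n - m) (a::'a::ab_group_add)"
  by (metis add_diff_cancel_left' le_add_diff_inverse rep_add)

lemma mg_add: "y \<in> monoid_gen A \<Longrightarrow> x \<in> monoid_gen A \<Longrightarrow> x + y \<in> monoid_gen (A::'a::monoid_add set)"
proof (induction y rule: monoid_gen.induct)
  case zero then show ?case by simp
next
  case (add s a)
  then show ?case by (metis add.assoc monoid_gen.add)
qed

lemma mg_gen: "a \<in> A \<Longrightarrow> a \<in> monoid_gen A"
  using monoid_gen.add[OF monoid_gen.zero] by fastforce

lemma mg_mono: "x \<in> monoid_gen A \<Longrightarrow> A \<subseteq> B \<Longrightarrow> x \<in> monoid_gen B"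
proof (induction x rule: monoid_gen.induct)
  case zero then show ?case by (simp add: monoid_gen.zero)
next
  case (add s a) then show ?case by (auto intro: monoid_gen.add)
qed

lemma mg_rep: "a \<in> A \<Longrightarrow> rep n a \<in> monoid_gen A"
  by (induction n) (auto intro: monoid_gen.intros)

lemma mg_insert: "z \<in> monoid_gen (insert a A) \<Longrightarrow> \<exists>x n. x \<in> monoid_gen A \<and> z = x + rep n (a::'a::comm_monoid_add)"
proof (induction z rule: monoid_gen.induct)
  case zero
  then show ?case by (rule exI[of _ 0], rule exI[of _ 0]) (auto intro: monoid_gen.zero)
next
  case (add s b)
  then obtain x n where xn: "x \<in> monoid_gen A" "s = x + rep n a" by blast
  show ?case
  proof (cases "b = a")
    case True
    then show ?thesis using xn by (intro exI[of _ x] exI[of _ "Suc n"]) (simp add: add.assoc)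
  next
    case False
    then have "b \<in> A" using add by simp
    then have "x + b \<in> monoid_gen A" using xn(1) by (simp add: monoid_gen.add)
    moreover have "s + b = (x + b) + rep n a" using xn by (simp add: ac_simps)
    ultimately show ?thesis by blast
  qed
qed

lemma mg_empty: "monoid_gen {} = {0::'a::monoid_add}"
proof
  show "monoid_gen {} \<subseteq> {0::'a}"
  proof
    fix x :: 'a assume "x \<in> monoid_gen {}" then show "x \<in> {0}"
      by (induction x rule: monoid_gen.induct) auto
  qed
qed (auto intro: monoid_gen.zero)

lemma dickson:
  fixes A :: "'a::ab_group_add set"
  assumes "finite A"
  shows "E \<subseteq> monoid_gen A \<Longrightarrow> \<exists>F\<subseteq>E. finite F \<and> (\<forall>e\<in>E. \<exists>f\<in>F. e - f \<in> monoid_gen A)"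
using assms proof (induction A arbitrary: E rule: finite_induct)
  case empty
  then have "E \<subseteq> {0}" by (simp add: mg_empty)
  then have "finite E" using finite_subset by blast
  then show ?case by (intro exI[of _ E]) (auto simp: mg_empty)
next
  case (insert a A)
  define P where "P = {x \<in> monoid_gen A. \<exists>n. x + rep n a \<in> E}"
  obtain F0 where F0: "F0 \<subseteq> P" "finite F0" "\<forall>x\<in>P. \<exists>f\<in>F0. x - f \<in> monoid_gen A"
    using insert.IH[of P] P_def by auto
  define nf where "nf f = (SOME n. f + rep n a \<in> E)" for f
  have nf: "f + rep (nf f) a \<in> E" if "f \<in> F0" for f
  proof -
    have "\<exists>n. f + rep n a \<in> E" using that F0(1) P_def by auto
    then show ?thesis unfolding nf_def by (rule someI_ex)
  qed
  define m0 where "m0 = Max (insert 0 (nf ` F0))"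
  have m0: "nf f \<le> m0" if "f \<in> F0" for f
    unfolding m0_def using that F0(2) by auto
  define Q where "Q j = {x \<in> monoid_gen A. x + rep j a \<in> E}" for j
  have "\<forall>j. \<exists>Fj. Fj \<subseteq> Q j \<and> finite Fj \<and> (\<forall>x\<in>Q j. \<exists>f\<in>Fj. x - f \<in> monoid_gen A)"
  proof
    fix j
    have "Q j \<subseteq> monoid_gen A" unfolding Q_def by auto
    then show "\<exists>Fj. Fj \<subseteq> Q j \<and> finite Fj \<and> (\<forall>x\<in>Q j. \<exists>f\<in>Fj. x - f \<in> monoid_gen A)"
      by (rule insert.IH)
  qed
  then have "\<exists>FF. \<forall>j. FF j \<subseteq> Q j \<and> finite (FF j) \<and> (\<forall>x\<in>Q j. \<exists>f\<in>FF j. x - f \<in> monoid_gen A)"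
    by (rule choice)
  then obtain FF where FF0: "\<forall>j. FF j \<subseteq> Q j \<and> finite (FF j) \<and> (\<forall>x\<in>Q j. \<exists>f\<in>FF j. x - f \<in> monoid_gen A)"
    by blast
  have FF: "\<And>j. FF j \<subseteq> Q j" "\<And>j. finite (FF j)"
      "\<And>j x. x \<in> Q j \<Longrightarrow> \<exists>f\<in>FF j. x - f \<in> monoid_gen A"
    using FF0 by blast+
  define F where "F = (\<lambda>f. f + rep (nf f) a) ` F0 \<union> (\<Union>j<m0. (\<lambda>f. f + rep j a) ` FF j)"
  have "F \<subseteq> E" unfolding F_def using nf FF(1) Q_def by auto
  moreover have "finite F" unfolding F_def using F0(2) FF(2) by auto
  moreover have "\<exists>f\<in>F. e - f \<in> monoid_gen (insert a A)" if e: "e \<in> E" for e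
  proof -
    obtain x n where xn: "x \<in> monoid_gen A" "e = x + rep n a"
      using mg_insert e insert.prems by blast
    have sub: "monoid_gen A \<subseteq> monoid_gen (insert a A)" using mg_mono[of _ A "insert a A"] by blast
    have ra: "rep k a \<in> monoid_gen (insert a A)" for k by (rule mg_rep) simp
    show ?thesis
    proof (cases "m0 \<le> n")
      case True
      have "x \<in> P" using xn e P_def by auto
      then obtain f where f: "f \<in> F0" "x - f \<in> monoid_gen A" using F0(3) by blast
      have le: "nf f \<le> n" using m0[OF f(1)] True by simp
      have "e - (f + rep (nf f) a) = (x - f) + (rep n a - rep (nf f) a)"
        using xn by (simp add: algebra_simps)
      also have "\<dots> = (x - f) + rep (n - nf f) a" using rep_diff[OF le] by simp
      finally have eq: "e - (f + rep (nf f) a) = (x - f) + rep (n - nf f) a" .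
      have "(x - f) + rep (n - nf f) a \<in> monoid_gen (insert a A)"
        using mg_add[OF ra] f(2) sub by blast
      then have "e - (f + rep (nf f) a) \<in> monoid_gen (insert a A)" by (subst eq)
      moreover have "f + rep (nf f) a \<in> F" unfolding F_def using f(1) by auto
      ultimately show ?thesis by blast
    next
      case False
      have "x \<in> Q n" using xn e Q_def by auto
      then obtain f where f: "f \<in> FF n" "x - f \<in> monoid_gen A" using FF(3) by blast
      have "e - (f + rep n a) = x - f" using xn by (simp add: algebra_simps)
      moreover have "f + rep n a \<in> F" unfolding F_def using f(1) False by auto
      moreover have "e - (f + rep n a) \<in> monoid_gen (insert a A)"
        using calculation(1) f(2) sub by (metis subsetD)
      ultimately show ?thesis by blast
    qed
  qed
  ultimately show ?case by blast
qed


lemma finite_lattice_points: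
  assumes "is_polytope M"
  shows "finite (lattice_points M)"
proof -
  obtain P where P: "finite P" "M = convex hull P" using assms is_polytope_def by blast
  have "compact M" using P by (simp add: compact_convex_hull finite_imp_compact)
  then have "bounded M" by (rule compact_imp_bounded)
  then obtain B where B: "\<And>x. x \<in> M \<Longrightarrow> norm x \<le> B" by (meson bounded_iff)
  define C where "C = ceiling B"
  have "lattice_points M \<subseteq> vec_lambda ` (PiE UNIV (\<lambda>_. {-C..C}))"
  proof
    fix z assume "z \<in> lattice_points M"
    then have zM: "(\<chi> i. real_of_int (z $ i)) \<in> M" by (simp add: lattice_points_def)
    have zb: "\<bar>z $ i\<bar> \<le> C" for i
    proof -
      have "\<bar>real_of_int (z $ i)\<bar> = \<bar>(\<chi> i. real_of_int (z $ i)) $ i\<bar>" by simp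
      also have "\<dots> \<le> norm (\<chi> i. real_of_int (z $ i))" by (rule component_le_norm_cart)
      also have "\<dots> \<le> B" using B zM by blast
      finally have "\<bar>real_of_int (z $ i)\<bar> \<le> B" .
      then show ?thesis unfolding C_def by linarith
    qed
    have "z $ i \<in> {-C..C}" for i using zb[of i] by (auto simp: abs_le_iff)
    then have "(\<lambda>i. z $ i) \<in> PiE UNIV (\<lambda>_. {-C..C})" by auto
    moreover have "z = vec_lambda (\<lambda>i. z $ i)" by simp
    ultimately show "z \<in> vec_lambda ` (PiE UNIV (\<lambda>_. {-C..C}))" by blast
  qed
  moreover have "finite (PiE (UNIV::'a set) (\<lambda>_. {-C..C}))" by (intro finite_PiE) auto
  ultimately show ?thesis using finite_subset by blast
qed

lemma zero_lattice_point: "0 \<in> M \<Longrightarrow> 0 \<in> lattice_points M"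
proof -
  assume "0 \<in> M"
  moreover have eq: "(\<chi> i. real_of_int ((0::int^'n) $ i)) = (0::real^'n)" by (simp add: vec_eq_iff)
  ultimately show ?thesis unfolding lattice_points_def mem_Collect_eq by (subst eq)
qed

locale sp =
  fixes M :: "(real ^ 'n) set" and lt :: "int ^ 'n \<Rightarrow> int ^ 'n \<Rightarrow> bool"
  assumes poly: "is_polytope M" and zM: "0 \<in> M" and mo: "monomial_order (SM M) lt"
begin

abbreviation "L \<equiv> lattice_points M"
abbreviation "H \<equiv> {(s, 1::int) | s. s \<in> L}"
abbreviation "deg \<equiv> affine_deg M"
abbreviation "prec \<equiv> sparse_order M lt"

lemma finL: "finite L" by (rule finite_lattice_points[OF poly])
lemma finH: "finite H" using finL by auto
lemma zL: "0 \<in> L" by (rule zero_lattice_point[OF zM])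

lemma SMh_eq: "SMh M = monoid_gen H" by (simp add: SMh_def)

lemma SMh_D: "x \<in> SMh M \<Longrightarrow> snd x \<ge> 0 \<and> fst x \<in> SM M"
  unfolding SMh_eq SM_def
proof (induction x rule: monoid_gen.induct)
  case zero then show ?case by (simp add: monoid_gen.zero)
next
  case (add s a) then show ?case by (auto intro: monoid_gen.add)
qed

lemma SMh_up0: "(s, int d) \<in> SMh M \<Longrightarrow> (s, int (d + k)) \<in> SMh M"
proof (induction k)
  case 0 then show ?case by simp
next
  case (Suc k)
  have "(0::int^'n, 1::int) \<in> H" using zL by auto
  then have "(s, int (d + k)) + (0, 1) \<in> SMh M" using Suc unfolding SMh_eq by (intro monoid_gen.add)
  then show ?case by (simp add: add.commute)
qed

lemma SMh_up: "(s, int d) \<in> SMh M \<Longrightarrow> d \<le> d' \<Longrightarrow> (s, int d') \<in> SMh M"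
  using SMh_up0[of s d "d' - d"] by simp

lemma SM_ex: "s \<in> SM M \<Longrightarrow> \<exists>d. (s, int d) \<in> SMh M"
  unfolding SM_def
proof (induction s rule: monoid_gen.induct)
  case zero then show ?case
    by (intro exI[of _ 0]) (simp add: SMh_eq zero_prod_def[symmetric] monoid_gen.zero)
next
  case (add s a)
  then obtain d where "(s, int d) \<in> SMh M" by blast
  moreover have "(a, 1) \<in> H" using add by auto
  ultimately have "(s, int d) + (a, 1) \<in> SMh M" unfolding SMh_eq by (intro monoid_gen.add)
  then show ?case by (intro exI[of _ "Suc d"]) (simp add: add.commute)
qed

lemma deg_in: "s \<in> SM M \<Longrightarrow> (s, int (deg s)) \<in> SMh M"
  unfolding affine_deg_def using SM_ex by (metis LeastI_ex)

lemma homog_in: "s \<in> SM M \<Longrightarrow> homog M s \<in> SMh M"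
  using deg_in by (simp add: homog_def)

lemma deg_le: "(s, int d) \<in> SMh M \<Longrightarrow> deg s \<le> d"
  unfolding affine_deg_def by (rule Least_le)

lemma SM_add: "s \<in> SM M \<Longrightarrow> t \<in> SM M \<Longrightarrow> s + t \<in> SM M"
  unfolding SM_def by (rule mg_add)

lemma deg_add: "s \<in> SM M \<Longrightarrow> t \<in> SM M \<Longrightarrow> deg (s + t) \<le> deg s + deg t"
proof -
  assume s: "s \<in> SM M" and t: "t \<in> SM M"
  have "(s, int (deg s)) + (t, int (deg t)) \<in> SMh M"
    using deg_in[OF s] deg_in[OF t] unfolding SMh_eq by (rule mg_add[rotated])
  then have "(s + t, int (deg s + deg t)) \<in> SMh M" by simp
  then show ?thesis by (rule deg_le)
qed

lemma level_finite: "finite {s. (s, int d) \<in> SMh M}"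
proof (induction d)
  case 0
  have "{s. (s, int 0) \<in> SMh M} \<subseteq> {0}"
  proof
    fix s assume "s \<in> {s. (s, int 0) \<in> SMh M}"
    then have "(s, 0::int) \<in> monoid_gen H" by (simp add: SMh_eq)
    then show "s \<in> {0}"
    proof (cases rule: monoid_gen.cases)
      case zero then show ?thesis by (simp add: zero_prod_def)
    next
      case (add x a)
      then have "snd x \<ge> 0" using SMh_D SMh_eq by blast
      moreover have "snd a = 1" using add by auto
      moreover have "(0::int) = snd x + snd a" using add(1) by (metis snd_add snd_conv)
      ultimately show ?thesis by linarith
    qed
  qed
  then show ?case using finite_subset by blast
next
  case (Suc d)
  have "{s. (s, int (Suc d)) \<in> SMh M} \<subseteq> (\<lambda>(x, p). x + p) ` ({s. (s, int d) \<in> SMh M} \<times> L)"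
  proof
    fix s assume "s \<in> {s. (s, int (Suc d)) \<in> SMh M}"
    then have "(s, int (Suc d)) \<in> monoid_gen H" by (simp add: SMh_eq)
    then show "s \<in> (\<lambda>(x, p). x + p) ` ({s. (s, int d) \<in> SMh M} \<times> L)"
    proof (cases rule: monoid_gen.cases)
      case zero then show ?thesis by (simp add: zero_prod_def)
    next
      case (add x a)
      then obtain p where p: "a = (p, 1)" "p \<in> L" by auto
      have e1: "s = fst x + p" using add(1) p(1) by (metis fst_add fst_conv)
      have e2: "int (Suc d) = snd x + 1" using add(1) p(1) by (metis snd_add snd_conv)
      have "x = (s - p, int d)" using e1 e2 by (intro prod_eqI) auto
      then have "(s - p, int d) \<in> SMh M" using add SMh_eq by simp
      then show ?thesis using p by (intro image_eqI[of _ _ "(s - p, p)"]) auto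
    qed
  qed
  moreover have "finite ((\<lambda>(x, p). x + p) ` ({s. (s, int d) \<in> SMh M} \<times> L))"
    using Suc finL by auto
  ultimately show ?case using finite_subset by blast
qed

end


context sp begin

lemma mo_parts:
  "\<forall>s\<in>SM M. \<not> lt s s"
  "\<forall>s\<in>SM M. \<forall>t\<in>SM M. \<forall>u\<in>SM M. lt s t \<longrightarrow> lt t u \<longrightarrow> lt s u"
  "\<forall>s\<in>SM M. \<forall>t\<in>SM M. s \<noteq> t \<longrightarrow> lt s t \<or> lt t s"
  "\<forall>s\<in>SM M. \<forall>t\<in>SM M. \<forall>u\<in>SM M. lt s t \<longrightarrow> lt (s + u) (t + u)"
proof -
  note m = mo[unfolded monomial_order_def]
  show "\<forall>s\<in>SM M. \<not> lt s s" using m by (rule conjunct1)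
  show "\<forall>s\<in>SM M. \<forall>t\<in>SM M. \<forall>u\<in>SM M. lt s t \<longrightarrow> lt t u \<longrightarrow> lt s u"
    using m by (elim conjE)
  show "\<forall>s\<in>SM M. \<forall>t\<in>SM M. s \<noteq> t \<longrightarrow> lt s t \<or> lt t s"
    using m by (elim conjE)
  show "\<forall>s\<in>SM M. \<forall>t\<in>SM M. \<forall>u\<in>SM M. lt s t \<longrightarrow> lt (s + u) (t + u)"
    using m by (elim conjE)
qed

lemma lt_irr: "s \<in> SM M \<Longrightarrow> \<not> lt s s" using mo_parts(1) by blast
lemma lt_trans: "s \<in> SM M \<Longrightarrow> t \<in> SM M \<Longrightarrow> u \<in> SM M \<Longrightarrow> lt s t \<Longrightarrow> lt t u \<Longrightarrow> lt s u"
  using mo_parts(2) by blast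
lemma lt_total: "s \<in> SM M \<Longrightarrow> t \<in> SM M \<Longrightarrow> s \<noteq> t \<Longrightarrow> lt s t \<or> lt t s"
  using mo_parts(3) by blast
lemma lt_add: "s \<in> SM M \<Longrightarrow> t \<in> SM M \<Longrightarrow> u \<in> SM M \<Longrightarrow> lt s t \<Longrightarrow> lt (s + u) (t + u)"
  using mo_parts(4) by blast

lemma prec_irr: "s \<in> SM M \<Longrightarrow> \<not> prec s s"
  using lt_irr unfolding sparse_order_def by auto
lemma prec_trans: "s \<in> SM M \<Longrightarrow> t \<in> SM M \<Longrightarrow> u \<in> SM M \<Longrightarrow> prec s t \<Longrightarrow> prec t u \<Longrightarrow> prec s u"
  using lt_trans[of s t u] unfolding sparse_order_def by auto
lemma prec_total: "s \<in> SM M \<Longrightarrow> t \<in> SM M \<Longrightarrow> s \<noteq> t \<Longrightarrow> prec s t \<or> prec t s"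
  using lt_total[of s t] unfolding sparse_order_def by auto

lemma max_ex: "finite K \<Longrightarrow> K \<noteq> {} \<Longrightarrow> K \<subseteq> SM M \<Longrightarrow> \<exists>s\<in>K. \<forall>t\<in>K. t \<noteq> s \<longrightarrow> prec t s"
proof (induction K rule: finite_ne_induct)
  case (singleton x) then show ?case by auto
next
  case (insert x F)
  then obtain s where s: "s \<in> F" "\<forall>t\<in>F. t \<noteq> s \<longrightarrow> prec t s" by auto
  have xS: "x \<in> SM M" and FS: "F \<subseteq> SM M" using insert by auto
  show ?case
  proof (cases "prec s x")
    case True
    have "prec t x" if "t \<in> F" for t
    proof (cases "t = s")
      case True then show ?thesis using \<open>prec s x\<close> by simp
    next
      case False then show ?thesis using s that prec_trans[of t s x] FS xS \<open>prec s x\<close> by auto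
    qed
    then show ?thesis by auto
  next
    case False
    then have "x \<noteq> s \<Longrightarrow> prec x s" using prec_total[of s x] xS FS s(1) by auto
    then show ?thesis using s by auto
  qed
qed

lemma lead:
  assumes "f \<noteq> 0" "Poly_Mapping.keys f \<subseteq> SM M"
  shows "lead_exp prec f \<in> Poly_Mapping.keys f \<and>
         (\<forall>t\<in>Poly_Mapping.keys f. t \<noteq> lead_exp prec f \<longrightarrow> prec t (lead_exp prec f))"
proof -
  let ?P = "\<lambda>s. s \<in> Poly_Mapping.keys f \<and> (\<forall>t\<in>Poly_Mapping.keys f. t \<noteq> s \<longrightarrow> prec t s)"
  obtain s where s: "?P s" using max_ex[of "Poly_Mapping.keys f"] assms by auto
  have "s' = s" if "?P s'" for s'
  proof (rule ccontr)
    assume ne: "s' \<noteq> s"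
    then have "prec s s'" "prec s' s" using s that by auto
    then have "prec s s" using prec_trans[of s s' s] s that assms(2) by auto
    then show False using prec_irr[of s] s assms(2) by auto
  qed
  then have "\<exists>!s. ?P s" using s by blast
  then show ?thesis unfolding lead_exp_def by (rule theI')
qed

definition "R = {(s, r). s \<in> SM M \<and> r \<in> SM M \<and> prec s r}"

lemma wfR: "wf R"
proof (rule wf_finite_segments)
  show "irrefl R" unfolding R_def irrefl_def using prec_irr by auto
  show "trans R"
  proof (rule transI)
    fix x y z assume "(x, y) \<in> R" "(y, z) \<in> R"
    then show "(x, z) \<in> R" unfolding R_def using prec_trans[of x y z] by auto
  qed
  fix r
  have "{s. (s, r) \<in> R} \<subseteq> (\<Union>d\<le>deg r. {s. (s, int d) \<in> SMh M})"
  proof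
    fix s assume "s \<in> {s. (s, r) \<in> R}"
    then have "s \<in> SM M" "deg s \<le> deg r" unfolding R_def sparse_order_def by auto
    then show "s \<in> (\<Union>d\<le>deg r. {s. (s, int d) \<in> SMh M})" using deg_in by blast
  qed
  moreover have "finite (\<Union>d\<le>deg r. {s. (s, int d) \<in> SMh M})" using level_finite by auto
  ultimately show "finite {s. (s, r) \<in> R}" using finite_subset by blast
qed

lemma sdiv_intro:
  assumes s: "s \<in> SM M" and r: "r \<in> SM M" and c: "homog M r - homog M s \<in> SMh M"
  shows "sdiv M s r"
proof -
  let ?c = "homog M r - homog M s"
  have cfst: "fst ?c = r - s" and csnd: "snd ?c = int (deg r) - int (deg s)" by (auto simp: homog_def)
  have rs: "r - s \<in> SM M" and ge: "int (deg r) - int (deg s) \<ge> 0" using SMh_D[OF c] cfst csnd by auto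
  have "?c = (r - s, int (deg r - deg s))" using cfst csnd ge by (intro prod_eqI) auto
  then have "(r - s, int (deg r - deg s)) \<in> SMh M" using c by simp
  then have "deg (r - s) \<le> deg r - deg s" by (rule deg_le)
  moreover have "deg r \<le> deg s + deg (r - s)" using deg_add[OF s rs] by simp
  ultimately have eq: "deg s + deg (r - s) = deg r" using ge by linarith
  show ?thesis unfolding sdiv_def hdiv_def
  proof (intro bexI[of _ ?c] conjI)
    show "homog M s + ?c = homog M r" by simp
    show "sparse_deg M (homog M s) + sparse_deg M ?c = sparse_deg M (homog M r)"
      using eq cfst by (simp add: sparse_deg_def homog_def)
  qed (rule c)
qed

lemma sdiv_elim:
  assumes "sdiv M s r"
  shows "r - s \<in> SM M \<and> deg r = deg s + deg (r - s)"
proof -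
  obtain c where c: "c \<in> SMh M" "homog M s + c = homog M r"
    "sparse_deg M (homog M s) + sparse_deg M c = sparse_deg M (homog M r)"
    using assms unfolding sdiv_def hdiv_def by blast
  have "fst c = r - s" using c(2) by (metis add_diff_cancel_left' fst_add fst_conv homog_def)
  then show ?thesis using c SMh_D[OF c(1)] by (simp add: sparse_deg_def homog_def)
qed

lemma prec_shift:
  assumes s: "s \<in> SM M" and t: "t \<in> SM M" and u: "u \<in> SM M"
    and p: "prec t s" and d: "deg (u + s) = deg u + deg s"
  shows "prec (u + t) (u + s)"
proof -
  have dt: "deg (u + t) \<le> deg u + deg t" by (rule deg_add[OF u t])
  show ?thesis
  proof (cases "deg t < deg s")
    case True then show ?thesis using dt d unfolding sparse_order_def by auto
  next
    case False
    then have "deg t = deg s" "lt t s" using p unfolding sparse_order_def by auto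
    then have "lt (t + u) (s + u)" using lt_add[OF t s u] by simp
    then show ?thesis using dt d \<open>deg t = deg s\<close> unfolding sparse_order_def by (auto simp: add.commute)
  qed
qed

end


lemma lookup_single_mult:
  fixes g :: "'a::ab_group_add \<Rightarrow>\<^sub>0 'k::field"
  shows "Poly_Mapping.lookup (Poly_Mapping.single u c * g) k = c * Poly_Mapping.lookup g (k - u)"
proof -
  have "Poly_Mapping.lookup (Poly_Mapping.single u c * g) k
      = Sum_any (\<lambda>l. (c when u = l) * Sum_any (\<lambda>q. Poly_Mapping.lookup g q when k = l + q))"
    unfolding Poly_Mapping.lookup_mult Poly_Mapping.lookup_single by simp
  also have "\<dots> = Sum_any (\<lambda>l. (c * Sum_any (\<lambda>q. Poly_Mapping.lookup g q when k = l + q)) when l = u)"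
    by (rule Sum_any.cong) (auto simp: when_def)
  also have "\<dots> = c * Sum_any (\<lambda>q. Poly_Mapping.lookup g q when k = u + q)" by simp
  also have "Sum_any (\<lambda>q. Poly_Mapping.lookup g q when k = u + q) = Sum_any (\<lambda>q. Poly_Mapping.lookup g q when q = k - u)"
    by (rule Sum_any.cong) (auto simp: when_def algebra_simps)
  also have "\<dots> = Poly_Mapping.lookup g (k - u)" by simp
  finally show ?thesis .
qed

context sp begin

lemma reduce:
  fixes I J G :: "((int^'n) \<Rightarrow>\<^sub>0 'k::field) set"
  assumes I: "is_ideal (salg (SM M)) I" and J: "is_ideal (salg (SM M)) J"
    and GI: "G \<subseteq> I" and GJ: "G \<subseteq> J"
    and P: "\<forall>f\<in>I. f \<noteq> 0 \<longrightarrow> (\<exists>g\<in>G. g \<noteq> 0 \<and> sdiv M (lead_exp prec g) (lead_exp prec f))"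
  shows "I \<subseteq> J"
proof -
  have Isub: "I \<subseteq> salg (SM M)" and Iadd: "\<forall>f\<in>I. \<forall>g\<in>I. f + g \<in> I"
    and Imul: "\<forall>f\<in>I. \<forall>h\<in>salg (SM M). h * f \<in> I" using I unfolding is_ideal_def by auto
  have J0: "0 \<in> J" and Jadd: "\<forall>f\<in>J. \<forall>g\<in>J. f + g \<in> J"
    and Jmul: "\<forall>f\<in>J. \<forall>h\<in>salg (SM M). h * f \<in> J" using J unfolding is_ideal_def by auto
  have keysI: "Poly_Mapping.keys f \<subseteq> SM M" if "f \<in> I" for f
    using that Isub unfolding salg_def by auto
  have main: "\<forall>f. f \<in> I \<longrightarrow> f \<noteq> 0 \<longrightarrow> lead_exp prec f = r \<longrightarrow> f \<in> J" for r
    using wfR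
  proof (induction r rule: wf_induct_rule)
    case (less r)
    show ?case
    proof (intro allI impI)
      fix f assume fI: "f \<in> I" and f0: "f \<noteq> 0" and lf: "lead_exp prec f = r"
      have kf: "Poly_Mapping.keys f \<subseteq> SM M" using keysI[OF fI] .
      have rk: "r \<in> Poly_Mapping.keys f" and rmax: "\<forall>t\<in>Poly_Mapping.keys f. t \<noteq> r \<longrightarrow> prec t r"
        using lead[OF f0 kf] lf by auto
      have rS: "r \<in> SM M" using rk kf by auto
      obtain g where gG: "g \<in> G" and g0: "g \<noteq> 0" and sd: "sdiv M (lead_exp prec g) r"
        using P fI f0 lf by blast
      define s where "s = lead_exp prec g"
      have gI: "g \<in> I" using gG GI by auto
      have kg: "Poly_Mapping.keys g \<subseteq> SM M" using keysI[OF gI] .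
      have sk: "s \<in> Poly_Mapping.keys g" and smax: "\<forall>t\<in>Poly_Mapping.keys g. t \<noteq> s \<longrightarrow> prec t s"
        using lead[OF g0 kg] s_def by auto
      have sS: "s \<in> SM M" using sk kg by auto
      define u where "u = r - s"
      have uS: "u \<in> SM M" and dr: "deg r = deg s + deg u"
        using sdiv_elim[OF sd[folded s_def]] u_def by auto
      have rus: "r = u + s" unfolding u_def by simp
      define c where "c = Poly_Mapping.lookup f r / Poly_Mapping.lookup g s"
      define m where "m = Poly_Mapping.single u c"
      have mR: "m \<in> salg (SM M)" and mR': "- m \<in> salg (SM M)"
        using uS unfolding m_def salg_def by auto
      have mgJ: "m * g \<in> J" using Jmul gG GJ mR by auto
      have mgI: "(- m) * g \<in> I" using Imul gI mR' by blast
      define h where "h = f - m * g"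
      have heq: "h = f + (- m) * g" unfolding h_def by simp
      have "f + (- m) * g \<in> I" using Iadd fI mgI by blast
      then have hI: "h \<in> I" by (simp only: heq)
      have gs0: "Poly_Mapping.lookup g s \<noteq> 0" using sk by (simp add: in_keys_iff)
      have lh: "Poly_Mapping.lookup h k = Poly_Mapping.lookup f k - c * Poly_Mapping.lookup g (k - u)" for k
        unfolding h_def m_def by (simp add: Poly_Mapping.lookup_minus lookup_single_mult)
      have hkeys: "prec k r" if kh: "k \<in> Poly_Mapping.keys h" for k
      proof -
        have nz: "Poly_Mapping.lookup f k - c * Poly_Mapping.lookup g (k - u) \<noteq> 0"
          using kh lh by (simp add: in_keys_iff)
        have kr: "k \<noteq> r"
        proof
          assume "k = r"
          then have "k - u = s" using rus by simp
          then have "Poly_Mapping.lookup f k - c * Poly_Mapping.lookup g (k - u) = 0"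
            using \<open>k = r\<close> gs0 unfolding c_def by simp
          then show False using nz by simp
        qed
        show ?thesis
        proof (cases "Poly_Mapping.lookup f k = 0")
          case False
          then have "k \<in> Poly_Mapping.keys f" by (simp add: in_keys_iff)
          then show ?thesis using rmax kr by auto
        next
          case True
          then have "Poly_Mapping.lookup g (k - u) \<noteq> 0" using nz by auto
          then have tk: "k - u \<in> Poly_Mapping.keys g" by (simp add: in_keys_iff)
          have ts: "k - u \<noteq> s" using kr rus by auto
          have pt: "prec (k - u) s" using smax tk ts by auto
          have tS: "k - u \<in> SM M" using tk kg by auto
          have "deg (u + s) = deg u + deg s" using dr rus by simp
          then have "prec (u + (k - u)) (u + s)" by (rule prec_shift[OF sS tS uS pt])
          then show ?thesis using rus by simp
        qed
      qed
      show "f \<in> J"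
      proof (cases "h = 0")
        case True
        then have "f = m * g" unfolding h_def by simp
        then show ?thesis using mgJ by simp
      next
        case False
        have kh: "Poly_Mapping.keys h \<subseteq> SM M" using keysI[OF hI] .
        have lhk: "lead_exp prec h \<in> Poly_Mapping.keys h" using lead[OF False kh] by auto
        then have "(lead_exp prec h, r) \<in> R" unfolding R_def using hkeys kh rS by auto
        then have "h \<in> J" using less.IH hI False by blast
        moreover have "f = h + m * g" unfolding h_def by simp
        ultimately show ?thesis using Jadd mgJ by auto
      qed
    qed
  qed
  show ?thesis
  proof
    fix f assume "f \<in> I"
    then show "f \<in> J" using main J0 by (cases "f = 0") auto
  qed
qed

lemma exists_gb:
  fixes I :: "((int^'n) \<Rightarrow>\<^sub>0 'k::field) set"
  assumes I: "is_ideal (salg (SM M)) I"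
  shows "\<exists>G. finite G \<and> sparse_groebner_basis M prec I G"
proof -
  have Isub: "I \<subseteq> salg (SM M)" using I unfolding is_ideal_def by auto
  have keysI: "Poly_Mapping.keys f \<subseteq> SM M" if "f \<in> I" for f
    using that Isub unfolding salg_def by auto
  have leadS: "lead_exp prec f \<in> SM M" if "f \<in> I" "f \<noteq> 0" for f
    using lead[OF that(2) keysI[OF that(1)]] keysI[OF that(1)] by auto
  define E where "E = {homog M (lead_exp prec f) | f. f \<in> I \<and> f \<noteq> 0}"
  have "E \<subseteq> monoid_gen H"
    unfolding E_def using leadS homog_in SMh_eq by auto
  then obtain F where F: "F \<subseteq> E" "finite F" "\<forall>e\<in>E. \<exists>f\<in>F. e - f \<in> monoid_gen H"
    using dickson[OF finH] by blast
  have "\<forall>e\<in>F. \<exists>f. f \<in> I \<and> f \<noteq> 0 \<and> homog M (lead_exp prec f) = e" using F(1) E_def by blast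
  then obtain pick where pick: "\<forall>e\<in>F. pick e \<in> I \<and> pick e \<noteq> 0 \<and> homog M (lead_exp prec (pick e)) = e"
    by metis
  define G where "G = pick ` F"
  have fin: "finite G" unfolding G_def using F(2) by auto
  have GI: "G \<subseteq> I" unfolding G_def using pick by auto
  have P: "\<forall>f\<in>I. f \<noteq> 0 \<longrightarrow> (\<exists>g\<in>G. g \<noteq> 0 \<and> sdiv M (lead_exp prec g) (lead_exp prec f))"
  proof (intro ballI impI)
    fix f assume fI: "f \<in> I" and f0: "f \<noteq> 0"
    have "homog M (lead_exp prec f) \<in> E" unfolding E_def using fI f0 by auto
    then obtain e' where e': "e' \<in> F" "homog M (lead_exp prec f) - e' \<in> monoid_gen H" using F(3) by blast
    define g where "g = pick e'"
    have gI: "g \<in> I" "g \<noteq> 0" "homog M (lead_exp prec g) = e'" using pick e'(1) g_def by auto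
    have "sdiv M (lead_exp prec g) (lead_exp prec f)"
      using sdiv_intro[OF leadS[OF gI(1,2)] leadS[OF fI f0]] e'(2) gI(3) SMh_eq by simp
    moreover have "g \<in> G" unfolding G_def g_def using e'(1) by auto
    ultimately show "\<exists>g\<in>G. g \<noteq> 0 \<and> sdiv M (lead_exp prec g) (lead_exp prec f)" using gI by blast
  qed
  have gen: "ideal_gen (salg (SM M)) G = I"
  proof
    show "ideal_gen (salg (SM M)) G \<subseteq> I" unfolding ideal_gen_def using I GI by blast
    show "I \<subseteq> ideal_gen (salg (SM M)) G" unfolding ideal_gen_def
    proof (rule Inter_greatest)
      fix J assume "J \<in> {J. is_ideal (salg (SM M)) J \<and> G \<subseteq> J}"
      then show "I \<subseteq> J" using reduce[OF I _ GI _ P] by blast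
    qed
  qed
  show ?thesis unfolding sparse_groebner_basis_def using fin GI gen P by blast
qed

end

theorem mainTheorem6:
  fixes M :: "(real ^ 'n) set"
    and lt :: "int ^ 'n \<Rightarrow> int ^ 'n \<Rightarrow> bool"
    and I :: "((int ^ 'n) \<Rightarrow>\<^sub>0 'k::field_char_0) set"
  assumes "is_polytope M"
    and "0 \<in> M"
    and "pointed (SM M)"
    and "pointed (SMh M)"
    and "monomial_order (SM M) lt"
    and "is_ideal (salg (SM M)) I"
  shows "\<exists>G. finite G \<and> sparse_groebner_basis M (sparse_order M lt) I G"
proof -
  interpret sp M lt using assms by unfold_locales
  show ?thesis using exists_gb[OF assms(6)] .
qed

end
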